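(* Let $T=(\vec G,G,\prec,A)$ be a strictly simplicial twisted graph with edge set $E$. Then for every $\boldsymbol\theta\in\mathbb{R}^E$ respecting $\prec$ there is a set $B\subset\mathcal C(\prec)$ such that the system of strict linear inequalities $\widehat c\cdot\mathbf r>0$, $c\in A\cup B$, in the unknown $\mathbf r\in\mathbb{R}^E$, is a minimal insoluble system.
   Context: Signed sets on a finite set $E$: pairs $X=(X^+,X^-)$ of disjoint subsets, $X(e)=+1,-1,0$ according as $e\in X^+$, $e\in X^-$, or neither; support $\underline X=X^+\cup X^-$. Conformal: no $e$ with $X(e)=-Y(e)\ne0$; composition $(X\circ Y)(e)=X(e)$ if $X(e)\ne0$, else $Y(e)$. For a total order $<$ on $E$, $\mathcal C(<)=\{(\{e_1,e_3\},\{e_2\}),(\{e_2\},\{e_1,e_3\}):e_1<e_2<e_3\}$ (circuits of the rank 2 oriented matroid $\mathcal M(<)$; vectors are compositions of pairwise conformal families of circuits); for a partial order $\prec$, $\mathcal C(\prec)=\bigcap_{<\supseteq\prec}\mathcal C(<)$. For a directed graph $\vec G=(V,\vec E)$ (no loops, parallel or antiparallel edges), underlying simple graph $G=(V,E)$, a strong map $\mathcal M^*(\vec G)\to\mathcal M(<)$ means every signed minimal cut $(\{(u,w):u\in S,w\notin S\},\{(u,w):w\in S,u\notin S\})$ ($S$, $V\setminus S$ inducing connected subgraphs) is a vector of $\mathcal M(<)$; $C^*_v=(\{(u,v)\in\vec E\},\{(v,u)\in\vec E\})$. A twisted graph $T=(\vec G,G,\prec,A)$: $\prec$ a partial order on $E$,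 $G$ three-edge-connected, $A\subset\mathcal C(\prec)$, a strong map $\mathcal M^*(\vec G)\to\mathcal M(<)$ for every total $<\supseteq\prec$, and a partition $A=\bigsqcup_{v}A_v$ with members of $A_v$ pairwise conformal and composing to $C^*_v$. $\boldsymbol\theta\in\mathbb{R}^E$ respects $\prec$ if $0<\theta_e<180$ (degrees) and $\theta_e<\theta_f$ whenever $e\prec f$. For $c\in\mathcal C(\prec)$, $\widehat c\in\mathbb{R}^E$ has $\widehat c(e)=0$ for $e\notin\underline c$ and $\widehat c(e)=c(e)\sin(\theta_{e''}-\theta_{e'})$ if $\underline c=\{e,e',e''\}$ with $e'\prec e''$; $\Sigma(T)$ is the matrix with rows $\widehat a$, $a\in A$. A matrix with $r+1$ rows and $r$ columns is a simplex if its rows have a linear dependency with all coefficients positive and every row dependency is a multiple of it. $T$ is simplicial on $F$ if for every $\boldsymbol\theta$ respecting $\prec$ the submatrix of $\Sigma(T)$ on columns $F$ is a simplex; $T$ is strictly simplicial if it is simplicial on some $F$ with $E\setminus F$ totally ordered by $\prec$. A system $M\mathbf r>0$ is minimal insoluble if it has no solution but every system obtained by deleting at least one inequality has a solution. *)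

theory Defs
  imports "HOL-Analysis.Analysis"
begin

text \<open>A signed set is a pair (X+, X-) of disjoint subsets.\<close>
type_synonym 'a sset = "'a set \<times> 'a set"

definition ssign :: "'a sset \<Rightarrow> 'a \<Rightarrow> real" where
  "ssign X e = (if e \<in> fst X then 1 else if e \<in> snd X then -1 else 0)"

definition ssupp :: "'a sset \<Rightarrow> 'a set" where
  "ssupp X = fst X \<union> snd X"

definition conformal :: "'a sset \<Rightarrow> 'a sset \<Rightarrow> bool" where
  "conformal X Y \<longleftrightarrow> fst X \<inter> snd Y = {} \<and> snd X \<inter> fst Y = {}"

text \<open>Composition: (X o Y)(e) = X(e) if X(e) \<noteq> 0, else Y(e).\<close>
definition scomp :: "'a sset \<Rightarrow> 'a sset \<Rightarrow> 'a sset" where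
  "scomp X Y = (fst X \<union> (fst Y - snd X), snd X \<union> (snd Y - fst X))"

definition scomp_list :: "'a sset list \<Rightarrow> 'a sset" where
  "scomp_list xs = foldr scomp xs ({}, {})"

definition strict_po_on :: "'a set \<Rightarrow> 'a rel \<Rightarrow> bool" where
  "strict_po_on E P \<longleftrightarrow> P \<subseteq> E \<times> E \<and> irrefl P \<and> trans P"

definition strict_total_on :: "'a set \<Rightarrow> 'a rel \<Rightarrow> bool" where
  "strict_total_on E L \<longleftrightarrow> strict_po_on E L \<and> total_on E L"

definition circuits_tot :: "'a rel \<Rightarrow> 'a sset set" where
  "circuits_tot L = {({e1, e3}, {e2}) | e1 e2 e3. (e1, e2) \<in> L \<and> (e2, e3) \<in> L}
                  \<union> {({e2}, {e1, e3}) | e1 e2 e3. (e1, e2) \<in> L \<and> (e2, e3) \<in> L}"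

definition is_vector :: "'a rel \<Rightarrow> 'a sset \<Rightarrow> bool" where
  "is_vector L X \<longleftrightarrow> (\<exists>xs. set xs \<subseteq> circuits_tot L \<and>
       (\<forall>Y\<in>set xs. \<forall>Z\<in>set xs. conformal Y Z) \<and> X = scomp_list xs)"

definition circuits_po :: "'a set \<Rightarrow> 'a rel \<Rightarrow> 'a sset set" where
  "circuits_po E P = (\<Inter> {circuits_tot L | L. strict_total_on E L \<and> P \<subseteq> L})"

text \<open>A directed graph on vertex set V with arc set Ed; arcs are also the edges of the
  underlying simple graph G (no loops, no antiparallel arcs; parallel arcs are impossible
  in the set representation).\<close>
definition digraph :: "'v set \<Rightarrow> ('v \<times> 'v) set \<Rightarrow> bool" where
  "digraph V Ed \<longleftrightarrow> finite V \<and> Ed \<subseteq> V \<times> V \<and> (\<forall>u. (u, u) \<notin> Ed) \<and>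
     (\<forall>u w. (u, w) \<in> Ed \<longrightarrow> (w, u) \<notin> Ed)"

definition connected_graph :: "'v set \<Rightarrow> ('v \<times> 'v) set \<Rightarrow> bool" where
  "connected_graph V F \<longleftrightarrow> V \<noteq> {} \<and>
     (\<forall>u\<in>V. \<forall>w\<in>V. (u, w) \<in> ({(x, y). (x, y) \<in> F \<or> (y, x) \<in> F} \<inter> (V \<times> V))\<^sup>*)"

definition three_edge_connected :: "'v set \<Rightarrow> ('v \<times> 'v) set \<Rightarrow> bool" where
  "three_edge_connected V Ed \<longleftrightarrow> card V \<ge> 2 \<and>
     (\<forall>F. F \<subseteq> Ed \<and> card F < 3 \<longrightarrow> connected_graph V (Ed - F))"

definition signed_cut :: "('v \<times> 'v) set \<Rightarrow> 'v set \<Rightarrow> ('v \<times> 'v) sset" where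
  "signed_cut Ed S = ({(u, w) \<in> Ed. u \<in> S \<and> w \<notin> S}, {(u, w) \<in> Ed. w \<in> S \<and> u \<notin> S})"

definition signed_min_cuts :: "'v set \<Rightarrow> ('v \<times> 'v) set \<Rightarrow> ('v \<times> 'v) sset set" where
  "signed_min_cuts V Ed = {signed_cut Ed S | S. S \<subseteq> V \<and>
      connected_graph S (Ed \<inter> (S \<times> S)) \<and> connected_graph (V - S) (Ed \<inter> ((V - S) \<times> (V - S)))}"

definition strong_map :: "'v set \<Rightarrow> ('v \<times> 'v) set \<Rightarrow> ('v \<times> 'v) rel \<Rightarrow> bool" where
  "strong_map V Ed L \<longleftrightarrow> (\<forall>X \<in> signed_min_cuts V Ed. is_vector L X)"

definition vertex_cocircuit :: "('v \<times> 'v) set \<Rightarrow> 'v \<Rightarrow> ('v \<times> 'v) sset" where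
  "vertex_cocircuit Ed v = ({(u, w) \<in> Ed. w = v}, {(u, w) \<in> Ed. u = v})"

definition twisted_graph ::
  "'v set \<Rightarrow> ('v \<times> 'v) set \<Rightarrow> ('v \<times> 'v) rel \<Rightarrow> ('v \<times> 'v) sset set \<Rightarrow> bool" where
  "twisted_graph V Ed P A \<longleftrightarrow>
     digraph V Ed \<and> strict_po_on Ed P \<and> three_edge_connected V Ed \<and>
     A \<subseteq> circuits_po Ed P \<and>
     (\<forall>L. strict_total_on Ed L \<and> P \<subseteq> L \<longrightarrow> strong_map V Ed L) \<and>
     (\<exists>Av :: 'v \<Rightarrow> ('v \<times> 'v) sset set.
        A = (\<Union>v\<in>V. Av v) \<and>
        (\<forall>v\<in>V. \<forall>w\<in>V. v \<noteq> w \<longrightarrow> Av v \<inter> Av w = {}) \<and>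
        (\<forall>v\<in>V. (\<forall>X\<in>Av v. \<forall>Y\<in>Av v. conformal X Y) \<and>
                 (\<exists>xs. distinct xs \<and> set xs = Av v \<and> scomp_list xs = vertex_cocircuit Ed v)))"

text \<open>\<theta> theta_respects \<prec> (angles in degrees).\<close>
definition theta_respects :: "'a set \<Rightarrow> 'a rel \<Rightarrow> ('a \<Rightarrow> real) \<Rightarrow> bool" where
  "theta_respects E P \<theta> \<longleftrightarrow> (\<forall>e\<in>E. 0 < \<theta> e \<and> \<theta> e < 180) \<and> (\<forall>(e, f)\<in>P. \<theta> e < \<theta> f)"

definition sin_deg :: "real \<Rightarrow> real" where
  "sin_deg x = sin (x * pi / 180)"

definition chat :: "'a rel \<Rightarrow> ('a \<Rightarrow> real) \<Rightarrow> 'a sset \<Rightarrow> 'a \<Rightarrow> real" where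
  "chat P \<theta> c e = (if e \<in> ssupp c then
      ssign c e * (THE s. \<exists>e' e''. ssupp c = {e, e', e''} \<and> (e', e'') \<in> P \<and>
                                     s = sin_deg (\<theta> e'' - \<theta> e'))
    else 0)"

definition simplex_matrix :: "'r set \<Rightarrow> 'a set \<Rightarrow> ('r \<Rightarrow> 'a \<Rightarrow> real) \<Rightarrow> bool" where
  "simplex_matrix R F M \<longleftrightarrow> finite R \<and> finite F \<and> card R = card F + 1 \<and>
     (\<exists>coef. (\<forall>a\<in>R. coef a > 0) \<and> (\<forall>f\<in>F. (\<Sum>a\<in>R. coef a * M a f) = 0) \<and>
          (\<forall>\<mu>. (\<forall>f\<in>F. (\<Sum>a\<in>R. \<mu> a * M a f) = 0) \<longrightarrow> (\<exists>t. \<forall>a\<in>R. \<mu> a = t * coef a)))"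

definition simplicial_on ::
  "'a set \<Rightarrow> 'a rel \<Rightarrow> 'a sset set \<Rightarrow> 'a set \<Rightarrow> bool" where
  "simplicial_on E P A F \<longleftrightarrow>
     (\<forall>\<theta>. theta_respects E P \<theta> \<longrightarrow> simplex_matrix A F (\<lambda>a e. chat P \<theta> a e))"

definition strictly_simplicial ::
  "'v set \<Rightarrow> ('v \<times> 'v) set \<Rightarrow> ('v \<times> 'v) rel \<Rightarrow> ('v \<times> 'v) sset set \<Rightarrow> bool" where
  "strictly_simplicial V Ed P A \<longleftrightarrow> twisted_graph V Ed P A \<and>
     (\<exists>F. F \<subseteq> Ed \<and> simplicial_on Ed P A F \<and> total_on (Ed - F) P)"

definition minimal_insoluble :: "'a set \<Rightarrow> 'i set \<Rightarrow> ('i \<Rightarrow> 'a \<Rightarrow> real) \<Rightarrow> bool" where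
  "minimal_insoluble E I M \<longleftrightarrow>
     \<not> (\<exists>r. \<forall>i\<in>I. (\<Sum>e\<in>E. M i e * r e) > 0) \<and>
     (\<forall>J. J \<subset> I \<longrightarrow> (\<exists>r. \<forall>i\<in>J. (\<Sum>e\<in>E. M i e * r e) > 0))"

end

theory Submission
  imports Defs
begin

lemma max_exists:
  assumes "finite E" "E \<noteq> {}" "trans P" "irrefl P"
  shows "\<exists>x\<in>E. \<forall>y\<in>E. (x,y) \<notin> P"
  using assms
proof (induction E rule: finite_induct)
  case empty then show ?case by simp
next
  case (insert a E)
  show ?case
  proof (cases "E = {}")
    case True then show ?thesis using insert.prems by (auto simp: irrefl_def)
  next
    case False
    then obtain x where x: "x\<in>E" "\<forall>y\<in>E. (x,y) \<notin> P" using insert by blast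
    show ?thesis
    proof (cases "(x,a) \<in> P")
      case True
      have "\<forall>y\<in>insert a E. (a,y) \<notin> P"
        using True x insert.prems by (auto simp: irrefl_def dest: transD)
      then show ?thesis by blast
    next
      case False then show ?thesis using x by blast
    qed
  qed
qed

lemma rank_exists:
  assumes "finite E" "trans P" "irrefl P"
  shows "\<exists>f::'a\<Rightarrow>nat. inj_on f E \<and> (\<forall>x\<in>E. \<forall>y\<in>E. (x,y)\<in>P \<longrightarrow> f x < f y)"
  using assms(1)
proof (induction E rule: finite_remove_induct)
  case empty then show ?case by simp
next
  case (remove A)
  obtain x where x: "x\<in>A" "\<forall>y\<in>A. (x,y) \<notin> P"
    using max_exists[OF remove(1,2) assms(2,3)] by blast
  obtain f' :: "'a \<Rightarrow> nat" where f': "inj_on f' (A - {x})" "\<forall>y\<in>A-{x}. \<forall>z\<in>A-{x}. (y,z)\<in>P \<longrightarrow> f' y < f' z"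
    using remove(4)[OF x(1)] by blast
  define f where "f = f'(x := Suc (\<Sum>y\<in>A-{x}. f' y))"
  have lt: "f y < f x" if "y \<in> A - {x}" for y
  proof -
    have "f' y \<le> (\<Sum>y\<in>A-{x}. f' y)" using that remove(1) by (intro member_le_sum) auto
    then show ?thesis using that by (simp add: f_def)
  qed
  have "inj_on f A"
  proof (rule inj_onI)
    fix y z assume yz: "y\<in>A" "z\<in>A" "f y = f z"
    show "y = z"
    proof (cases "y = x \<or> z = x")
      case True then show ?thesis using lt yz by (metis Diff_iff less_irrefl singletonD)
    next
      case False then show ?thesis using yz f'(1) by (auto simp: f_def inj_on_def)
    qed
  qed
  moreover have "\<forall>y\<in>A. \<forall>z\<in>A. (y,z)\<in>P \<longrightarrow> f y < f z"
  proof (intro ballI impI)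
    fix y z assume yz: "y\<in>A" "z\<in>A" "(y,z)\<in>P"
    show "f y < f z"
    proof (cases "y = x")
      case True then show ?thesis using x yz by blast
    next
      case yx: False
      show ?thesis
      proof (cases "z = x")
        case True then show ?thesis using lt yz yx by auto
      next
        case False then show ?thesis using yx yz f'(2) by (auto simp: f_def)
      qed
    qed
  qed
  ultimately show ?case by blast
qed

lemma szpilrajn:
  assumes "finite E" "strict_po_on E P"
  shows "\<exists>L. strict_total_on E L \<and> P \<subseteq> L"
proof -
  have P: "P \<subseteq> E \<times> E" "irrefl P" "trans P" using assms(2) by (auto simp: strict_po_on_def)
  obtain f :: "_ \<Rightarrow> nat" where f: "inj_on f E" "\<forall>x\<in>E. \<forall>y\<in>E. (x,y)\<in>P \<longrightarrow> f x < f y"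
    using rank_exists[OF assms(1) P(3,2)] by blast
  define L where "L = {(x,y). x\<in>E \<and> y\<in>E \<and> f x < f y}"
  have "strict_total_on E L"
    unfolding strict_total_on_def strict_po_on_def L_def
    using f(1) by (auto simp: irrefl_def trans_def total_on_def inj_on_def dest: linorder_neqE_nat)
  moreover have "P \<subseteq> L" using P(1) f(2) by (auto simp: L_def)
  ultimately show ?thesis by blast
qed

lemma ext_up:
  assumes "finite E" "strict_po_on E P" "m \<in> E" "T \<subseteq> E" "m \<notin> T" "\<forall>t\<in>T. (t,m) \<notin> P"
  shows "\<exists>L. strict_total_on E L \<and> P \<subseteq> L \<and> (\<forall>t\<in>T. (m,t) \<in> L)"
proof -
  have P: "P \<subseteq> E \<times> E" "irrefl P" "trans P" using assms(2) by (auto simp: strict_po_on_def)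
  define P' where "P' = P \<union> {(x,y). (x = m \<or> (x,m)\<in>P) \<and> (\<exists>t\<in>T. y = t \<or> (t,y)\<in>P)}"
  have "strict_po_on E P'"
    unfolding strict_po_on_def
  proof (intro conjI)
    show "P' \<subseteq> E \<times> E" using P(1) assms(3,4) by (auto simp: P'_def)
    show "irrefl P'" unfolding irrefl_def P'_def
      using P assms(5,6) by (auto simp: irrefl_def dest: transD)
    show "trans P'" unfolding trans_def P'_def
      using P assms(5,6) by (auto simp: irrefl_def dest: transD)
  qed
  then obtain L where L: "strict_total_on E L" "P' \<subseteq> L" using szpilrajn[OF assms(1)] by blast
  have "P \<subseteq> L" "\<forall>t\<in>T. (m,t) \<in> L" using L(2) by (auto simp: P'_def)
  then show ?thesis using L(1) by blast
qed

lemma strict_po_converse: "strict_po_on E P \<Longrightarrow> strict_po_on E (P\<inverse>)"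
  by (auto simp: strict_po_on_def irrefl_def trans_def)

lemma strict_total_converse: "strict_total_on E P \<Longrightarrow> strict_total_on E (P\<inverse>)"
  by (auto simp: strict_total_on_def strict_po_on_def irrefl_def trans_def total_on_def)

lemma ext_down:
  assumes "finite E" "strict_po_on E P" "m \<in> E" "T \<subseteq> E" "m \<notin> T" "\<forall>t\<in>T. (m,t) \<notin> P"
  shows "\<exists>L. strict_total_on E L \<and> P \<subseteq> L \<and> (\<forall>t\<in>T. (t,m) \<in> L)"
proof -
  obtain L where L: "strict_total_on E L" "P\<inverse> \<subseteq> L" "\<forall>t\<in>T. (m,t) \<in> L"
    using ext_up[OF assms(1) strict_po_converse[OF assms(2)] assms(3,4,5)] assms(6) by auto
  then show ?thesis using strict_total_converse[OF L(1)] by auto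
qed

lemma lin_solve_aux:
  assumes "finite E"
  shows "\<forall>R M t. finite R \<longrightarrow> (\<forall>\<mu>. (\<forall>e\<in>E. (\<Sum>a\<in>R. \<mu> a * M a e) = 0) \<longrightarrow> (\<forall>a\<in>R. \<mu> a = 0))
         \<longrightarrow> (\<exists>r. \<forall>a\<in>R. (\<Sum>e\<in>E. M a e * r e) = (t a :: real))"
  using assms
proof (induction E rule: finite_induct)
  case empty
  show ?case
  proof (intro allI impI)
    fix R :: "'b set" and M :: "'b \<Rightarrow> 'a \<Rightarrow> real" and t :: "'b \<Rightarrow> real"
    assume "finite R" and h: "\<forall>\<mu>. (\<forall>e\<in>{}. (\<Sum>a\<in>R. \<mu> a * M a e) = 0) \<longrightarrow> (\<forall>a\<in>R. \<mu> a = 0)"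
    have h1: "\<forall>a\<in>R. (\<lambda>_. 1::real) a = 0" by (rule mp[OF spec[OF h, of "\<lambda>_. 1"]]) simp
    have "R = {}"
    proof (rule equals0I)
      fix a assume "a \<in> R" with h1 show False by simp
    qed
    then show "\<exists>r. \<forall>a\<in>R. (\<Sum>e\<in>{}. M a e * r e) = t a" by simp
  qed
next
  case (insert e0 E)
  show ?case
  proof (intro allI impI)
  fix R :: "'b set" and M :: "'b \<Rightarrow> 'a \<Rightarrow> real" and t :: "'b \<Rightarrow> real"
  assume prems: "finite R" "\<forall>\<mu>. (\<forall>e\<in>insert e0 E. (\<Sum>a\<in>R. \<mu> a * M a e) = 0) \<longrightarrow> (\<forall>a\<in>R. \<mu> a = 0)"
  show "\<exists>r. \<forall>a\<in>R. (\<Sum>e\<in>insert e0 E. M a e * r e) = t a"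
  proof (cases "\<exists>a0\<in>R. M a0 e0 \<noteq> 0")
    case False
    have indep: "\<forall>\<mu>. (\<forall>e\<in>E. (\<Sum>a\<in>R. \<mu> a * M a e) = 0) \<longrightarrow> (\<forall>a\<in>R. \<mu> a = 0)"
    proof (intro allI impI)
      fix \<mu> assume h: "\<forall>e\<in>E. (\<Sum>a\<in>R. \<mu> a * M a e) = 0"
      have "\<forall>e\<in>insert e0 E. (\<Sum>a\<in>R. \<mu> a * M a e) = 0" using h False by auto
      then show "\<forall>a\<in>R. \<mu> a = 0" using prems(2) by blast
    qed
    obtain r where r: "\<forall>a\<in>R. (\<Sum>e\<in>E. M a e * r e) = t a"
      using insert.IH prems(1) indep by blast
    have "\<forall>a\<in>R. (\<Sum>e\<in>insert e0 E. M a e * r e) = t a" using r False insert.hyps by simp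
    then show ?thesis by blast
  next
    case True
    then obtain a0 where a0: "a0\<in>R" "M a0 e0 \<noteq> 0" by blast
    define c where "c a = M a e0 / M a0 e0" for a
    define M' where "M' a e = M a e - c a * M a0 e" for a e
    define R' where "R' = R - {a0}"
    define t' where "t' a = t a - c a * t a0" for a
    have fR': "finite R'" using prems(1) by (simp add: R'_def)
    have indep: "\<forall>\<mu>. (\<forall>e\<in>E. (\<Sum>a\<in>R'. \<mu> a * M' a e) = 0) \<longrightarrow> (\<forall>a\<in>R'. \<mu> a = 0)"
    proof (intro allI impI)
      fix \<mu>' assume h: "\<forall>e\<in>E. (\<Sum>a\<in>R'. \<mu>' a * M' a e) = 0"
      define \<mu> where "\<mu> a = (if a = a0 then - (\<Sum>b\<in>R'. \<mu>' b * M b e0) / M a0 e0 else \<mu>' a)" for a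
      have split: "(\<Sum>a\<in>R. \<mu> a * M a e) = \<mu> a0 * M a0 e + (\<Sum>a\<in>R'. \<mu>' a * M a e)" for e
      proof -
        have "(\<Sum>a\<in>R. \<mu> a * M a e) = \<mu> a0 * M a0 e + (\<Sum>a\<in>R'. \<mu> a * M a e)"
          using sum.remove[OF prems(1) a0(1)] by (simp add: R'_def)
        moreover have "(\<Sum>a\<in>R'. \<mu> a * M a e) = (\<Sum>a\<in>R'. \<mu>' a * M a e)"
          by (intro sum.cong) (auto simp: \<mu>_def R'_def)
        ultimately show ?thesis by simp
      qed
      have "\<forall>e\<in>insert e0 E. (\<Sum>a\<in>R. \<mu> a * M a e) = 0"
      proof
        fix e assume "e \<in> insert e0 E"
        then consider "e = e0" | "e \<in> E" by auto
        then show "(\<Sum>a\<in>R. \<mu> a * M a e) = 0"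
        proof cases
          case 1 then show ?thesis using split a0(2) by (simp add: \<mu>_def)
        next
          case 2
          have "(\<Sum>a\<in>R'. \<mu>' a * M a e) = (\<Sum>a\<in>R'. \<mu>' a * M' a e + (\<mu>' a * c a) * M a0 e)"
            by (intro sum.cong) (auto simp: M'_def algebra_simps)
          also have "\<dots> = (\<Sum>a\<in>R'. \<mu>' a * M' a e) + (\<Sum>a\<in>R'. \<mu>' a * c a) * M a0 e"
            by (simp add: sum.distrib sum_distrib_right)
          also have "\<dots> = (\<Sum>a\<in>R'. \<mu>' a * c a) * M a0 e" using h 2 by simp
          also have "(\<Sum>a\<in>R'. \<mu>' a * c a) = (\<Sum>b\<in>R'. \<mu>' b * M b e0) / M a0 e0"
            by (simp add: c_def sum_divide_distrib)
          finally show ?thesis using split by (simp add: \<mu>_def)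
        qed
      qed
      then have "\<forall>a\<in>R. \<mu> a = 0" using prems(2) by blast
      then show "\<forall>a\<in>R'. \<mu>' a = 0"
      proof (intro ballI)
        fix a assume z: "\<forall>a\<in>R. \<mu> a = 0" and a: "a \<in> R'"
        then have "a \<in> R" "a \<noteq> a0" by (auto simp: R'_def)
        then show "\<mu>' a = 0" using z by (auto simp: \<mu>_def)
      qed
    qed
    obtain r' where r': "\<forall>a\<in>R'. (\<Sum>e\<in>E. M' a e * r' e) = t' a"
      using insert.IH fR' indep by blast
    define r where "r = r'(e0 := (t a0 - (\<Sum>e\<in>E. M a0 e * r' e)) / M a0 e0)"
    have sumE: "(\<Sum>e\<in>E. M a e * r e) = (\<Sum>e\<in>E. M a e * r' e)" for a
      using insert.hyps(2) by (intro sum.cong) (auto simp: r_def)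
    have "\<forall>a\<in>R. (\<Sum>e\<in>insert e0 E. M a e * r e) = t a"
    proof
      fix a assume a: "a\<in>R"
      have eq: "(\<Sum>e\<in>insert e0 E. M a e * r e) = M a e0 * r e0 + (\<Sum>e\<in>E. M a e * r' e)"
        using insert.hyps sumE by simp
      show "(\<Sum>e\<in>insert e0 E. M a e * r e) = t a"
      proof (cases "a = a0")
        case True then show ?thesis using eq a0(2) by (simp add: r_def)
      next
        case False
        then have "a \<in> R'" using a by (simp add: R'_def)
        then have "(\<Sum>e\<in>E. M' a e * r' e) = t' a" using r' by blast
        moreover have "(\<Sum>e\<in>E. M' a e * r' e) = (\<Sum>e\<in>E. M a e * r' e) - c a * (\<Sum>e\<in>E. M a0 e * r' e)"
          by (simp add: M'_def algebra_simps sum_subtractf sum_distrib_left)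
        ultimately have s1: "(\<Sum>e\<in>E. M a e * r' e) = t a - c a * t a0 + c a * (\<Sum>e\<in>E. M a0 e * r' e)"
          by (simp add: t'_def)
        have s2: "M a e0 * r e0 = c a * (t a0 - (\<Sum>e\<in>E. M a0 e * r' e))"
          by (simp add: r_def c_def)
        show ?thesis unfolding eq s1 s2 by (simp add: algebra_simps)
      qed
    qed
    then show ?thesis by blast
  qed
  qed
qed

lemma lin_solve:
  assumes "finite E" "finite R" "\<forall>\<mu>. (\<forall>e\<in>E. (\<Sum>a\<in>R. \<mu> a * M a e) = 0) \<longrightarrow> (\<forall>a\<in>R. \<mu> a = 0)"
  shows "\<exists>r. \<forall>a\<in>R. (\<Sum>e\<in>E. M a e * r e) = (t a :: real)"
  using lin_solve_aux[OF assms(1)] assms(2,3) by blast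

lemma minimal_insoluble_crit:
  assumes "finite E" "finite I" "I \<noteq> {}" "\<forall>i\<in>I. lam i > (0::real)"
    "\<forall>e\<in>E. (\<Sum>i\<in>I. lam i * M i e) = 0"
    "\<forall>\<mu>. (\<forall>e\<in>E. (\<Sum>i\<in>I. \<mu> i * M i e) = 0) \<longrightarrow> (\<exists>t. \<forall>i\<in>I. \<mu> i = t * lam i)"
  shows "minimal_insoluble E I M"
  unfolding minimal_insoluble_def
proof (intro conjI allI impI notI)
  assume "\<exists>r. \<forall>i\<in>I. (\<Sum>e\<in>E. M i e * r e) > 0"
  then obtain r where r: "\<forall>i\<in>I. (\<Sum>e\<in>E. M i e * r e) > 0" by blast
  have "0 < (\<Sum>i\<in>I. lam i * (\<Sum>e\<in>E. M i e * r e))"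
    using assms(2,3,4) r by (intro sum_pos) auto
  also have "(\<Sum>i\<in>I. lam i * (\<Sum>e\<in>E. M i e * r e)) = (\<Sum>i\<in>I. \<Sum>e\<in>E. lam i * M i e * r e)"
    by (simp add: sum_distrib_left mult.assoc)
  also have "\<dots> = (\<Sum>e\<in>E. \<Sum>i\<in>I. lam i * M i e * r e)" by (rule sum.swap)
  also have "\<dots> = (\<Sum>e\<in>E. (\<Sum>i\<in>I. lam i * M i e) * r e)" by (simp add: sum_distrib_right)
  also have "\<dots> = 0" using assms(5) by simp
  finally show False by simp
next
  fix J assume J: "J \<subset> I"
  obtain i0 where i0: "i0\<in>I" "i0\<notin>J" using J by blast
  have indep: "\<forall>\<mu>. (\<forall>e\<in>E. (\<Sum>i\<in>I-{i0}. \<mu> i * M i e) = 0) \<longrightarrow> (\<forall>i\<in>I-{i0}. \<mu> i = 0)"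
  proof (intro allI impI)
    fix \<mu> assume h: "\<forall>e\<in>E. (\<Sum>i\<in>I-{i0}. \<mu> i * M i e) = 0"
    define \<mu>' where "\<mu>' i = (if i = i0 then 0 else \<mu> i)" for i
    have "(\<Sum>i\<in>I. \<mu>' i * M i e) = (\<Sum>i\<in>I-{i0}. \<mu> i * M i e)" for e
    proof -
      have "(\<Sum>i\<in>I. \<mu>' i * M i e) = \<mu>' i0 * M i0 e + (\<Sum>i\<in>I-{i0}. \<mu>' i * M i e)"
        using sum.remove[OF assms(2) i0(1)] by simp
      also have "(\<Sum>i\<in>I-{i0}. \<mu>' i * M i e) = (\<Sum>i\<in>I-{i0}. \<mu> i * M i e)"
        by (intro sum.cong) (auto simp: \<mu>'_def)
      finally show ?thesis by (simp add: \<mu>'_def)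
    qed
    then have "\<forall>e\<in>E. (\<Sum>i\<in>I. \<mu>' i * M i e) = 0" using h by simp
    then obtain t where t: "\<forall>i\<in>I. \<mu>' i = t * lam i" using assms(6) by blast
    then have "\<mu>' i0 = t * lam i0" using i0(1) by blast
    then have "t * lam i0 = 0" by (simp add: \<mu>'_def)
    then have "t = 0" using assms(4) i0(1) by auto
    then show "\<forall>i\<in>I-{i0}. \<mu> i = 0"
    proof (intro ballI)
      fix i assume "t = 0" "i \<in> I - {i0}"
      then have "\<mu>' i = 0" "\<mu>' i = \<mu> i" using t by (auto simp: \<mu>'_def)
      then show "\<mu> i = 0" by simp
    qed
  qed
  obtain r where r: "\<forall>i\<in>I-{i0}. (\<Sum>e\<in>E. M i e * r e) = 1"
    using lin_solve[OF assms(1) _ indep, where t = "\<lambda>_. 1"] assms(2) by auto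
  show "\<exists>r. \<forall>i\<in>J. 0 < (\<Sum>e\<in>E. M i e * r e)"
  proof (intro exI[of _ r] ballI)
    fix i assume "i \<in> J"
    then have "i \<in> I - {i0}" using J i0 by blast
    then show "0 < (\<Sum>e\<in>E. M i e * r e)" using r by simp
  qed
qed

lemma the_val:
  assumes "S = {x,y,z}" "x\<noteq>y" "x\<noteq>z" "y\<noteq>z" "(y,z)\<in>P" "(z,y)\<notin>P"
  shows "(THE s. \<exists>e' e''. S = {x,e',e''} \<and> (e',e'')\<in>P \<and> s = sin_deg (\<theta> e'' - \<theta> e'))
         = sin_deg (\<theta> z - \<theta> y)"
proof (rule the_equality)
  show "\<exists>e' e''. S = {x,e',e''} \<and> (e',e'')\<in>P \<and> sin_deg (\<theta> z - \<theta> y) = sin_deg (\<theta> e'' - \<theta> e')"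
    using assms by blast
next
  fix s assume "\<exists>e' e''. S = {x,e',e''} \<and> (e',e'')\<in>P \<and> s = sin_deg (\<theta> e'' - \<theta> e')"
  then obtain e' e'' where ee0: "S = {x,e',e''}" "(e',e'')\<in>P" "s = sin_deg (\<theta> e'' - \<theta> e')"
    by blast
  have ee: "{x,y,z} = {x,e',e''}" "(e',e'')\<in>P" "s = sin_deg (\<theta> e'' - \<theta> e')"
    using ee0 assms(1) by simp_all
  have "y \<in> {x,e',e''}" "z \<in> {x,e',e''}" using ee(1) by auto
  then have "e' = y \<and> e'' = z" using assms(2-6) ee(2) by auto
  then show "s = sin_deg (\<theta> z - \<theta> y)" using ee(3) by simp
qed

lemma strict_facts:
  assumes "irrefl P" "trans P" "(a,m)\<in>P" "(m,b)\<in>P"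
  shows "a\<noteq>m" "m\<noteq>b" "a\<noteq>b" "(a,b)\<in>P" "(m,a)\<notin>P" "(b,m)\<notin>P" "(b,a)\<notin>P"
  using assms by (auto simp: irrefl_def dest: transD)

lemma chat_pos:
  assumes "irrefl P" "trans P" "(a,m)\<in>P" "(m,b)\<in>P"
  shows "chat P \<theta> ({a,b},{m}) e = (if e = a then sin_deg (\<theta> b - \<theta> m)
            else if e = m then - sin_deg (\<theta> b - \<theta> a)
            else if e = b then sin_deg (\<theta> m - \<theta> a) else 0)"
proof -
  note sf = strict_facts[OF assms]
  have S: "ssupp ({a,b},{m}) = {a,m,b}" "ssupp ({a,b},{m}) = {m,a,b}" "ssupp ({a,b},{m}) = {b,a,m}"
    by (auto simp: ssupp_def)
  have va: "chat P \<theta> ({a,b},{m}) a = sin_deg (\<theta> b - \<theta> m)"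
    unfolding chat_def S(1)
    apply (subst the_val[of "{a,m,b}" a m b])
    using sf assms by (auto simp: ssign_def)
  have vm: "chat P \<theta> ({a,b},{m}) m = - sin_deg (\<theta> b - \<theta> a)"
    unfolding chat_def S(2)
    apply (subst the_val[of "{m,a,b}" m a b])
    using sf assms by (auto simp: ssign_def)
  have vb: "chat P \<theta> ({a,b},{m}) b = sin_deg (\<theta> m - \<theta> a)"
    unfolding chat_def S(3)
    apply (subst the_val[of "{b,a,m}" b a m])
    using sf assms by (auto simp: ssign_def)
  have vz: "e \<notin> {a,m,b} \<Longrightarrow> chat P \<theta> ({a,b},{m}) e = 0"
    unfolding chat_def S(1) by simp
  show ?thesis using va vm vb vz sf by auto
qed

lemma chat_swap:
  assumes "X \<inter> Y = {}"
  shows "chat P \<theta> (Y, X) e = - chat P \<theta> (X, Y) e"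
proof -
  have "ssupp (Y,X) = ssupp (X,Y)" by (auto simp: ssupp_def)
  moreover have "e \<in> ssupp (X,Y) \<Longrightarrow> ssign (Y,X) e = - ssign (X,Y) e"
    using assms by (auto simp: ssign_def ssupp_def)
  ultimately show ?thesis unfolding chat_def by simp
qed

lemma chat_neg:
  assumes "irrefl P" "trans P" "(a,m)\<in>P" "(m,b)\<in>P"
  shows "chat P \<theta> ({m},{a,b}) e = - chat P \<theta> ({a,b},{m}) e"
  using strict_facts[OF assms] by (intro chat_swap) auto

lemma trig_cos: "sin (b - m) * cos a - sin (b - a) * cos m + sin (m - a) * cos b = (0::real)"
  by (simp add: sin_diff algebra_simps)

lemma trig_sin: "sin (b - m) * sin a - sin (b - a) * sin m + sin (m - a) * sin b = (0::real)"
  by (simp add: sin_diff algebra_simps)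

lemma sin_deg_diff: "sin_deg (x - y) = sin (x * pi / 180 - y * pi / 180)"
  by (simp add: sin_deg_def diff_divide_distrib left_diff_distrib)

lemma orth_pos:
  assumes "finite E" "a\<in>E" "m\<in>E" "b\<in>E" "irrefl P" "trans P" "(a,m)\<in>P" "(m,b)\<in>P"
    and h: "h = cos \<or> h = sin"
  shows "(\<Sum>e\<in>E. chat P \<theta> ({a,b},{m}) e * h (\<theta> e * pi / 180)) = 0"
proof -
  note sf = strict_facts[OF assms(5-8)]
  have "(\<Sum>e\<in>E. chat P \<theta> ({a,b},{m}) e * h (\<theta> e * pi / 180))
      = (\<Sum>e\<in>{a,m,b}. chat P \<theta> ({a,b},{m}) e * h (\<theta> e * pi / 180))"
    using assms(1-4) by (intro sum.mono_neutral_right) (auto simp: chat_pos[OF assms(5-8)])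
  also have "\<dots> = sin_deg (\<theta> b - \<theta> m) * h (\<theta> a * pi / 180)
      - sin_deg (\<theta> b - \<theta> a) * h (\<theta> m * pi / 180) + sin_deg (\<theta> m - \<theta> a) * h (\<theta> b * pi / 180)"
    using sf by (simp add: chat_pos[OF assms(5-8)])
  also have "\<dots> = 0"
  proof (cases "h = cos")
    case True then show ?thesis unfolding sin_deg_diff
      using trig_cos[of "\<theta> b * pi / 180" "\<theta> m * pi / 180" "\<theta> a * pi / 180"] by simp
  next
    case False then have "h = sin" using h by simp
    then show ?thesis unfolding sin_deg_diff
      using trig_sin[of "\<theta> b * pi / 180" "\<theta> m * pi / 180" "\<theta> a * pi / 180"] by simp
  qed
  finally show ?thesis .
qed

lemma orth_neg:
  assumes "finite E" "a\<in>E" "m\<in>E" "b\<in>E" "irrefl P" "trans P" "(a,m)\<in>P" "(m,b)\<in>P"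
    and h: "h = cos \<or> h = sin"
  shows "(\<Sum>e\<in>E. chat P \<theta> ({m},{a,b}) e * h (\<theta> e * pi / 180)) = 0"
proof -
  have "(\<Sum>e\<in>E. chat P \<theta> ({m},{a,b}) e * h (\<theta> e * pi / 180))
       = - (\<Sum>e\<in>E. chat P \<theta> ({a,b},{m}) e * h (\<theta> e * pi / 180))"
    by (simp add: chat_neg[OF assms(5-8)] sum_negf)
  then show ?thesis using orth_pos[OF assms] by simp
qed

lemma circ_structure:
  assumes "finite E" "strict_po_on E P" "c \<in> circuits_po E P"
  shows "\<exists>a m b. (a,m)\<in>P \<and> (m,b)\<in>P \<and> (c = ({a,b},{m}) \<or> c = ({m},{a,b}))"
proof -
  have P: "P \<subseteq> E \<times> E" "irrefl P" "trans P" using assms(2) by (auto simp: strict_po_on_def)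
  have inall: "c \<in> circuits_tot L" if "strict_total_on E L" "P \<subseteq> L" for L
    using assms(3) that unfolding circuits_po_def by blast
  obtain L0 where L0: "strict_total_on E L0" "P \<subseteq> L0" using szpilrajn[OF assms(1,2)] by blast
  obtain e1 e2 e3 where e: "(e1,e2)\<in>L0" "(e2,e3)\<in>L0" "c = ({e1,e3},{e2}) \<or> c = ({e2},{e1,e3})"
    using inall[OF L0] unfolding circuits_tot_def by blast
  have L0s: "L0 \<subseteq> E\<times>E" "irrefl L0" "trans L0" using L0(1) by (auto simp: strict_total_on_def strict_po_on_def)
  have d: "e1\<noteq>e2" "e2\<noteq>e3" "e1\<noteq>e3" using strict_facts[OF L0s(2,3) e(1,2)] by auto
  have inE: "e1\<in>E" "e2\<in>E" "e3\<in>E" using e(1,2) L0s(1) by auto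
  have key: "((e1,e2)\<in>L \<and> (e2,e3)\<in>L) \<or> ((e3,e2)\<in>L \<and> (e2,e1)\<in>L)"
    if LL: "strict_total_on E L" "P \<subseteq> L" for L
  proof -
    obtain x1 x2 x3 where x: "(x1,x2)\<in>L" "(x2,x3)\<in>L" "c = ({x1,x3},{x2}) \<or> c = ({x2},{x1,x3})"
      using inall[OF LL] unfolding circuits_tot_def by blast
    have Ls: "irrefl L" "trans L" using LL(1) by (auto simp: strict_total_on_def strict_po_on_def)
    have dx: "x1\<noteq>x2" "x2\<noteq>x3" "x1\<noteq>x3" using strict_facts[OF Ls x(1,2)] by auto
    have "x2 = e2 \<and> ((x1 = e1 \<and> x3 = e3) \<or> (x1 = e3 \<and> x3 = e1))"
    proof -
      consider "({e1,e3},{e2}) = ({x1,x3},{x2})" | "({e1,e3},{e2}) = ({x2},{x1,x3})"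
        | "({e2},{e1,e3}) = ({x1,x3},{x2})" | "({e2},{e1,e3}) = ({x2},{x1,x3})"
        using e(3) x(3) by metis
      then show ?thesis
      proof cases
        case 1 then show ?thesis by (simp add: doubleton_eq_iff) blast
      next
        case 2 then have "{e1,e3} = {x2}" by simp
        then show ?thesis using d by (metis doubleton_eq_iff insert_absorb2)
      next
        case 3 then have "{e2} = {x1,x3}" by simp
        then show ?thesis using dx by (metis doubleton_eq_iff insert_absorb2)
      next
        case 4 then show ?thesis by (simp add: doubleton_eq_iff) blast
      qed
    qed
    then show ?thesis using x(1,2) by auto
  qed
  have asym: "False" if "strict_total_on E L" "(x,y)\<in>L" "(y,x)\<in>L" for L x y
    using that by (auto simp: strict_total_on_def strict_po_on_def irrefl_def dest: transD)
  have good: "((e1,e2)\<in>P \<and> (e2,e3)\<in>P) \<or> ((e3,e2)\<in>P \<and> (e2,e1)\<in>P)"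
  proof (rule ccontr)
    assume nc: "\<not> ?thesis"
    show False
    proof (cases "(e1,e2)\<notin>P \<and> (e3,e2)\<notin>P")
      case True
      obtain L where L: "strict_total_on E L" "P \<subseteq> L" "\<forall>t\<in>{e1,e3}. (e2,t) \<in> L"
        using ext_up[OF assms(1,2) inE(2), of "{e1,e3}"] True inE d by auto
      show False using key[OF L(1,2)] L(3) asym[OF L(1)] by blast
    next
      case F1: False
      show False
      proof (cases "(e2,e1)\<notin>P \<and> (e2,e3)\<notin>P")
        case True
        obtain L where L: "strict_total_on E L" "P \<subseteq> L" "\<forall>t\<in>{e1,e3}. (t,e2) \<in> L"
          using ext_down[OF assms(1,2) inE(2), of "{e1,e3}"] True inE d by auto
        show False using key[OF L(1,2)] L(3) asym[OF L(1)] by blast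
      next
        case False
        have asP: "\<And>x y. (x,y)\<in>P \<Longrightarrow> (y,x)\<in>P \<Longrightarrow> False"
          using P(2,3) unfolding irrefl_def trans_def by blast
        from False F1 have "(e2,e1)\<in>P \<or> (e2,e3)\<in>P" "(e1,e2)\<in>P \<or> (e3,e2)\<in>P" by auto
        then show False using nc asP by blast
      qed
    qed
  qed
  then show ?thesis
  proof
    assume "(e1,e2)\<in>P \<and> (e2,e3)\<in>P" then show ?thesis using e(3) by blast
  next
    assume "(e3,e2)\<in>P \<and> (e2,e1)\<in>P" then show ?thesis using e(3) by (metis insert_commute)
  qed
qed

lemma circ_orth:
  assumes "finite E" "strict_po_on E P" "c \<in> circuits_po E P" and h: "h = cos \<or> h = sin"
  shows "(\<Sum>e\<in>E. chat P \<theta> c e * h (\<theta> e * pi / 180)) = 0"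
proof -
  have P: "P \<subseteq> E \<times> E" "irrefl P" "trans P" using assms(2) by (auto simp: strict_po_on_def)
  obtain a m b where amb: "(a,m)\<in>P" "(m,b)\<in>P" "c = ({a,b},{m}) \<or> c = ({m},{a,b})"
    using circ_structure[OF assms(1-3)] by blast
  have "a\<in>E" "m\<in>E" "b\<in>E" using amb(1,2) P(1) by auto
  then show ?thesis using amb orth_pos[OF assms(1) _ _ _ P(2,3) amb(1,2) h] orth_neg[OF assms(1) _ _ _ P(2,3) amb(1,2) h]
    by auto
qed

lemma chat_zero_outside: "e \<notin> ssupp c \<Longrightarrow> chat P \<theta> c e = 0"
  by (simp add: chat_def)

lemma sin_deg_pos:
  assumes "theta_respects E P \<theta>" "(x,y)\<in>P" "x\<in>E" "y\<in>E"
  shows "sin_deg (\<theta> y - \<theta> x) > 0"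
proof -
  have h: "0 < \<theta> x" "\<theta> y < 180" "\<theta> x < \<theta> y" using assms unfolding theta_respects_def by auto
  have "(\<theta> y - \<theta> x) * pi / 180 < 180 * pi / 180"
    using h pi_gt_zero by (intro divide_strict_right_mono mult_strict_right_mono) auto
  moreover have "0 < (\<theta> y - \<theta> x) * pi / 180" using h pi_gt_zero by simp
  ultimately show ?thesis unfolding sin_deg_def by (intro sin_gt_zero) auto
qed

lemma twisted_two:
  fixes V :: "'v set" and Ed :: "('v \<times> 'v) set" and A :: "('v \<times> 'v) sset set"
  assumes "twisted_graph V Ed P A"
  shows "\<exists>a\<in>A. \<exists>a'\<in>A. a \<noteq> a'"
proof -
  have ex: "\<exists>Av :: 'v \<Rightarrow> ('v \<times> 'v) sset set.
        A = (\<Union>v\<in>V. Av v) \<and>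
        (\<forall>v\<in>V. \<forall>w\<in>V. v \<noteq> w \<longrightarrow> Av v \<inter> Av w = {}) \<and>
        (\<forall>v\<in>V. (\<forall>X\<in>Av v. \<forall>Y\<in>Av v. conformal X Y) \<and>
                 (\<exists>xs. distinct xs \<and> set xs = Av v \<and> scomp_list xs = vertex_cocircuit Ed v))"
    using assms unfolding twisted_graph_def by (elim conjE) assumption
  then obtain Av :: "'v \<Rightarrow> ('v \<times> 'v) sset set" where Avc: "A = (\<Union>v\<in>V. Av v) \<and>
    (\<forall>v\<in>V. \<forall>w\<in>V. v \<noteq> w \<longrightarrow> Av v \<inter> Av w = {}) \<and>
    (\<forall>v\<in>V. (\<forall>X\<in>Av v. \<forall>Y\<in>Av v. conformal X Y) \<and>
                 (\<exists>xs. distinct xs \<and> set xs = Av v \<and> scomp_list xs = vertex_cocircuit Ed v))"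
    by (erule exE)
  note Av = conjunct1[OF Avc] conjunct1[OF conjunct2[OF Avc]] conjunct2[OF conjunct2[OF Avc]]
  have tc: "three_edge_connected V Ed" using assms by (simp add: twisted_graph_def)
  have cV: "card V \<ge> 2" using tc by (simp add: three_edge_connected_def)
  have conn: "connected_graph V (Ed - {})" using tc unfolding three_edge_connected_def by auto
  have finV: "finite V" using cV card.infinite by fastforce
  have two: "\<exists>w\<in>V. w \<noteq> v" if v: "v \<in> V" for v
  proof (rule ccontr)
    assume "\<not> ?thesis"
    then have "V = {v}" using v by blast
    then show False using cV by simp
  qed
  have nonempty: "Av v \<noteq> {}" if v: "v\<in>V" for v
  proof
    assume e: "Av v = {}"
    obtain xs where xs: "set xs = Av v" "scomp_list xs = vertex_cocircuit Ed v" using Av(3) v by meson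
    then have "xs = []" using e by simp
    then have "vertex_cocircuit Ed v = ({},{})" using xs(2) by (simp add: scomp_list_def)
    then have noinc: "\<And>u. (u,v)\<notin>Ed \<and> (v,u)\<notin>Ed" by (auto simp: vertex_cocircuit_def)
    obtain w where w: "w\<in>V" "w\<noteq>v" using two[OF v] by blast
    have "(v,w) \<in> ({(x, y). (x, y) \<in> Ed - {} \<or> (y, x) \<in> Ed - {}} \<inter> (V \<times> V))\<^sup>*"
      using conn v w(1) unfolding connected_graph_def by blast
    then obtain y where "(v,y) \<in> {(x, y). (x, y) \<in> Ed - {} \<or> (y, x) \<in> Ed - {}} \<inter> (V \<times> V)"
      using w(2) by (cases rule: converse_rtranclE) auto
    then show False using noinc by auto
  qed
  obtain v where v: "v\<in>V" using cV by fastforce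
  obtain w where w: "w\<in>V" "w\<noteq>v" using two[OF v] by blast
  obtain a where a: "a\<in>Av v" using nonempty[OF v] by blast
  obtain a' where a': "a'\<in>Av w" using nonempty[OF w(1)] by blast
  have "a \<noteq> a'" using Av(2) v w a a' by blast
  moreover have "a\<in>A" "a'\<in>A" using Av(1) v w a a' by auto
  ultimately show ?thesis by blast
qed

lemma rows_nonzero:
  assumes "finite A" "\<forall>a\<in>A. coef a > (0::real)"
    "\<forall>\<mu>. (\<forall>f\<in>F. (\<Sum>a\<in>A. \<mu> a * M a f) = 0) \<longrightarrow> (\<exists>t. \<forall>a\<in>A. \<mu> a = t * coef a)"
    "\<exists>a\<in>A. \<exists>a'\<in>A. a \<noteq> a'" "a \<in> A"
  shows "\<exists>f\<in>F. M a f \<noteq> 0"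
proof (rule ccontr)
  assume "\<not> ?thesis"
  then have z: "\<forall>f\<in>F. M a f = 0" by blast
  define \<mu> where "\<mu> x = (if x = a then 1 else (0::real))" for x
  have "(\<Sum>x\<in>A. \<mu> x * M x f) = M a f" for f
  proof -
    have "(\<Sum>x\<in>A. \<mu> x * M x f) = \<mu> a * M a f + (\<Sum>x\<in>A-{a}. \<mu> x * M x f)"
      using sum.remove[OF assms(1,5)] by simp
    also have "(\<Sum>x\<in>A-{a}. \<mu> x * M x f) = 0" by (intro sum.neutral) (auto simp: \<mu>_def)
    finally show ?thesis by (simp add: \<mu>_def)
  qed
  then have "\<forall>f\<in>F. (\<Sum>x\<in>A. \<mu> x * M x f) = 0" using z by simp
  then obtain t where t: "\<forall>x\<in>A. \<mu> x = t * coef x" using assms(3) by blast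
  obtain a' where a': "a'\<in>A" "a' \<noteq> a" using assms(4) by blast
  have "\<mu> a' = t * coef a'" using t a'(1) by blast
  moreover have "coef a' > 0" using assms(2) a'(1) by blast
  ultimately have "t = 0" using a' by (simp add: \<mu>_def)
  moreover have "\<mu> a = t * coef a" using t assms(5) by blast
  ultimately show False by (simp add: \<mu>_def)
qed

lemma decompK:
  assumes "finite K" "total_on K P" "irrefl P" "trans P"
  shows "\<exists>S K'. K = S \<union> K' \<and> S \<inter> K' = {} \<and>
     (S = {} \<or> (\<exists>p q. S = {p,q} \<and> (p = q \<or> (p,q)\<in>P))) \<and>
     (K' \<noteq> {} \<longrightarrow> (\<exists>p q. S = {p,q} \<and> (p,q)\<in>P \<and> (\<forall>f\<in>K'. (q,f)\<in>P)))"
proof (cases "K = {}")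
  case True then show ?thesis by (intro exI[of _ "{}"]) auto
next
  case False
  have cv: "trans (P\<inverse>)" "irrefl (P\<inverse>)" using assms(3,4) by simp_all
  obtain p where p: "p\<in>K" "\<forall>y\<in>K. (y,p) \<notin> P" using max_exists[OF assms(1) False cv] by auto
  show ?thesis
  proof (cases "K - {p} = {}")
    case True
    then have "K = {p,p}" using p by auto
    then show ?thesis by (intro exI[of _ "{p}"] exI[of _ "{}"]) auto
  next
    case F2: False
    obtain q where q: "q\<in>K-{p}" "\<forall>y\<in>K-{p}. (y,q) \<notin> P"
      using max_exists[OF _ F2 cv] assms(1) by auto
    have pq: "(p,q)\<in>P" using q p assms(2) unfolding total_on_def by blast
    have qf: "\<forall>f\<in>K - {p,q}. (q,f)\<in>P"
    proof
      fix f assume f: "f \<in> K - {p,q}"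
      then have "(q,f)\<in>P \<or> (f,q)\<in>P" using q assms(2) unfolding total_on_def by blast
      then show "(q,f)\<in>P" using q(2) f by blast
    qed
    show ?thesis
      using p(1) q(1) pq qf
      by (intro exI[of _ "{p,q}"] exI[of _ "K - {p,q}"]) auto
  qed
qed

lemma vanish:
  assumes "finite E" "S \<subseteq> E" "\<forall>e\<in>E-S. y e = 0"
    "S = {} \<or> (\<exists>p q. S = {p,q} \<and> (p = q \<or> (p,q)\<in>P))"
    "theta_respects E P \<theta>"
    "(\<Sum>e\<in>E. y e * cos (\<theta> e * pi / 180)) = 0" "(\<Sum>e\<in>E. y e * sin (\<theta> e * pi / 180)) = 0"
  shows "\<forall>e\<in>E. y e = (0::real)"
proof (cases "S = {}")
  case True then show ?thesis using assms(3) by simp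
next
  case False
  then obtain p q where pq: "S = {p,q}" "p = q \<or> (p,q)\<in>P" using assms(4) by blast
  have red: "(\<Sum>e\<in>E. y e * g e) = (\<Sum>e\<in>S. y e * g e)" for g :: "'a \<Rightarrow> real"
    using assms(1,2,3) by (intro sum.mono_neutral_right) auto
  define u where "u = \<theta> p * pi / 180"
  define v where "v = \<theta> q * pi / 180"
  have Sp: "p \<in> E" "q \<in> E" using pq(1) assms(2) by auto
  have "y p = 0 \<and> y q = 0"
  proof (cases "p = q")
    case True
    have c: "y p * cos u = 0" "y p * sin u = 0"
      using red[of "\<lambda>e. cos (\<theta> e * pi / 180)"] red[of "\<lambda>e. sin (\<theta> e * pi / 180)"] assms(6,7) pq(1) True
      by (simp_all add: u_def)
    have "y p = 0"
    proof (rule ccontr)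
      assume "y p \<noteq> 0"
      then have "cos u = 0" "sin u = 0" using c by auto
      then show False using sin_cos_squared_add[of u] by simp
    qed
    then show ?thesis using True by simp
  next
    case False
    then have P: "(p,q)\<in>P" using pq(2) by simp
    have c: "y p * cos u + y q * cos v = 0" "y p * sin u + y q * sin v = 0"
      using red[of "\<lambda>e. cos (\<theta> e * pi / 180)"] red[of "\<lambda>e. sin (\<theta> e * pi / 180)"] assms(6,7) pq(1) False
      by (simp_all add: u_def v_def)
    have sp: "sin (v - u) > 0" using sin_deg_pos[OF assms(5) P Sp]
      by (simp add: sin_deg_diff u_def v_def)
    have "y p * sin (v - u) = sin v * (y p * cos u + y q * cos v) - cos v * (y p * sin u + y q * sin v)"
      by (simp add: sin_diff algebra_simps)
    then have "y p * sin (v - u) = 0" using c by simp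
    moreover have "y q * sin (v - u) = cos u * (y p * sin u + y q * sin v) - sin u * (y p * cos u + y q * cos v)"
      by (simp add: sin_diff algebra_simps)
    then have "y q * sin (v - u) = 0" using c by simp
    ultimately show ?thesis using sp by simp
  qed
  then show ?thesis using assms(3) pq(1) by auto
qed

theorem mainTheorem13:
  fixes V :: "'v set" and Ed :: "('v \<times> 'v) set" and P :: "('v \<times> 'v) rel"
    and A :: "('v \<times> 'v) sset set"
  assumes "strictly_simplicial V Ed P A"
  shows "\<forall>\<theta>. theta_respects Ed P \<theta> \<longrightarrow>
           (\<exists>B. B \<subseteq> circuits_po Ed P \<and>
                minimal_insoluble Ed (A \<union> B) (\<lambda>c e. chat P \<theta> c e))"
proof (intro allI impI)
  fix \<theta> assume resp: "theta_respects Ed P \<theta>"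
  have tw: "twisted_graph V Ed P A" using assms by (simp add: strictly_simplicial_def)
  obtain F where F: "F \<subseteq> Ed" "simplicial_on Ed P A F" "total_on (Ed - F) P"
    using assms unfolding strictly_simplicial_def by blast
  have dg: "digraph V Ed" and po: "strict_po_on Ed P" and AC: "A \<subseteq> circuits_po Ed P"
    using tw by (simp_all add: twisted_graph_def)
  have finE: "finite Ed"
  proof -
    have "finite V" "Ed \<subseteq> V \<times> V" using dg by (simp_all add: digraph_def)
    then show ?thesis using finite_subset by blast
  qed
  have P: "P \<subseteq> Ed \<times> Ed" "irrefl P" "trans P" using po by (auto simp: strict_po_on_def)
  define M where "M = (\<lambda>c e. chat P \<theta> c e)"
  have sm: "simplex_matrix A F M" using F(2) resp unfolding simplicial_on_def M_def by blast
  then obtain coef where finA: "finite A" and finF: "finite F"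
    and coefpos: "\<forall>a\<in>A. coef a > 0" and coefdep: "\<forall>f\<in>F. (\<Sum>a\<in>A. coef a * M a f) = 0"
    and uniq: "\<forall>\<mu>. (\<forall>f\<in>F. (\<Sum>a\<in>A. \<mu> a * M a f) = 0) \<longrightarrow> (\<exists>t. \<forall>a\<in>A. \<mu> a = t * coef a)"
    unfolding simplex_matrix_def by blast
  have two: "\<exists>a\<in>A. \<exists>a'\<in>A. a \<noteq> a'" using twisted_two[OF tw] .
  have nz: "\<exists>f\<in>F. M a f \<noteq> 0" if "a \<in> A" for a
    using rows_nonzero[OF finA coefpos uniq two that] .
  have Ane: "A \<noteq> {}" using two by blast
  define K where "K = Ed - F"
  have finK: "finite K" using finE by (simp add: K_def)
  obtain S K' where SK: "K = S \<union> K'" "S \<inter> K' = {}"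
    "S = {} \<or> (\<exists>p q. S = {p,q} \<and> (p = q \<or> (p,q)\<in>P))"
    "K' \<noteq> {} \<longrightarrow> (\<exists>p q. S = {p,q} \<and> (p,q)\<in>P \<and> (\<forall>f\<in>K'. (q,f)\<in>P))"
  proof -
    have totK: "total_on K P" using F(3) by (simp add: K_def)
    show ?thesis using decompK[OF finK totK P(2,3)] by (elim exE conjE) (rule that; assumption)
  qed
  obtain p q where pq: "K' \<noteq> {} \<longrightarrow> (S = {p,q} \<and> (p,q)\<in>P \<and> (\<forall>f\<in>K'. (q,f)\<in>P))"
    using SK(4) by blast
  have finK': "finite K'" using finK SK(1) by simp
  have SE: "S \<subseteq> Ed" using SK(1) by (auto simp: K_def)
  have K'E: "K' \<subseteq> Ed" "K' \<inter> F = {}" using SK(1) by (auto simp: K_def)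
  have SF: "S \<inter> F = {}" using SK(1) by (auto simp: K_def)
  define s where "s e = (\<Sum>a\<in>A. coef a * M a e)" for e
  define bf where "bf f = ({p,f},{q})" for f :: "'v \<times> 'v"
  define nbf where "nbf f = ({q},{p,f})" for f :: "'v \<times> 'v"
  define K1 where "K1 = {f\<in>K'. s f < 0}"
  define K2 where "K2 = {f\<in>K'. s f > 0}"
  define B where "B = bf ` K1 \<union> nbf ` K2"
  define \<beta> where "\<beta> = sin_deg (\<theta> q - \<theta> p)"
  have K12: "K1 \<subseteq> K'" "K2 \<subseteq> K'" "finite K1" "finite K2" "K1 \<inter> K2 = {}"
    using finK' by (auto simp: K1_def K2_def)
  have fK: "(p,q)\<in>P" "(q,f)\<in>P" "(p,f)\<in>P" "p\<in>S" "q\<in>S" "f \<noteq> p" "f \<noteq> q" "p \<noteq> q"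
    "p \<in> Ed" "q \<in> Ed" "f \<in> Ed" "\<beta> > 0"
    if f: "f \<in> K'" for f
  proof -
    have ne: "K' \<noteq> {}" using f by blast
    show pq1: "(p,q)\<in>P" "(q,f)\<in>P" "p\<in>S" "q\<in>S" using pq ne f by auto
    show "(p,f)\<in>P" using P(3) pq1 by (meson transD)
    show "f \<noteq> p" "f \<noteq> q" using pq1 f SK(2) by auto
    show "p \<noteq> q" using strict_facts[OF P(2,3) pq1(1,2)] by simp
    show "p \<in> Ed" "q \<in> Ed" "f \<in> Ed" using pq1 SE K'E f by auto
    then show "\<beta> > 0" unfolding \<beta>_def using sin_deg_pos[OF resp pq1(1)] by simp
  qed
  have Mbf: "M (bf f) e = (if e = f then \<beta> else 0)" if f: "f \<in> K'" and e: "e \<in> F \<union> K'" for f e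
  proof -
    have "e \<noteq> p" "e \<noteq> q" using fK[OF f] e SK(2) SF by auto
    then show ?thesis unfolding M_def bf_def \<beta>_def
      using chat_pos[OF P(2,3) fK(1,2)[OF f], of \<theta> e] fK[OF f] by auto
  qed
  have Mnbf: "M (nbf f) e = - M (bf f) e" if f: "f \<in> K'" for f e
    unfolding M_def bf_def nbf_def using chat_neg[OF P(2,3) fK(1,2)[OF f]] by simp
  have Bcirc: "B \<subseteq> circuits_po Ed P"
  proof
    fix b assume "b \<in> B"
    then obtain f where f: "f \<in> K'" "b = bf f \<or> b = nbf f" using K12 by (auto simp: B_def)
    show "b \<in> circuits_po Ed P" unfolding circuits_po_def
    proof (rule InterI)
      fix X assume "X \<in> {circuits_tot L | L. strict_total_on Ed L \<and> P \<subseteq> L}"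
      then obtain L where L: "X = circuits_tot L" "P \<subseteq> L" by blast
      have "(p,q)\<in>L" "(q,f)\<in>L" using fK[OF f(1)] L(2) by auto
      then show "b \<in> X" using f(2) unfolding L(1) circuits_tot_def bf_def nbf_def by blast
    qed
  qed
  have BzF: "M b e = 0" if "b \<in> B" "e \<in> F" for b e
  proof -
    obtain f where f: "f \<in> K'" "b = bf f \<or> b = nbf f" using K12 \<open>b \<in> B\<close> by (auto simp: B_def)
    have "f \<noteq> e" using f(1) K'E(2) that(2) by auto
    then have "M (bf f) e = 0" using Mbf[OF f(1), of e] that(2) by auto
    then show ?thesis using f(2) Mnbf[OF f(1), of e] by auto
  qed
  have AB: "A \<inter> B = {}"
  proof (rule ccontr)
    assume "A \<inter> B \<noteq> {}"
    then obtain b where "b \<in> A" "b \<in> B" by blast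
    then show False using nz BzF by blast
  qed
  have injb: "inj_on bf K'"
  proof (rule inj_onI)
    fix f g assume fg: "f \<in> K'" "g \<in> K'" "bf f = bf g"
    then have "{p,f} = {p,g}" by (simp add: bf_def)
    then show "f = g" using fK(6)[OF fg(1)] fK(6)[OF fg(2)] by (auto simp: doubleton_eq_iff)
  qed
  have injn: "inj_on nbf K'"
  proof (rule inj_onI)
    fix f g assume fg: "f \<in> K'" "g \<in> K'" "nbf f = nbf g"
    then have "{p,f} = {p,g}" by (simp add: nbf_def)
    then show "f = g" using fK(6)[OF fg(1)] fK(6)[OF fg(2)] by (auto simp: doubleton_eq_iff)
  qed
  have inj1: "inj_on bf K1" using injb K12(1) inj_on_subset by blast
  have inj2: "inj_on nbf K2" using injn K12(2) inj_on_subset by blast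
  have disjB: "bf ` K1 \<inter> nbf ` K2 = {}"
  proof (rule ccontr)
    assume "bf ` K1 \<inter> nbf ` K2 \<noteq> {}"
    then obtain f g where fg: "f \<in> K1" "g \<in> K2" "bf f = nbf g" by blast
    then have "{q} = {p,g}" by (simp add: bf_def nbf_def)
    then show False using fK(8)[of f] fg(1) K12(1) by (metis insertI1 singletonD subsetD)
  qed
  have finB: "finite B" using K12 by (simp add: B_def)
  have sumdec: "(\<Sum>i\<in>A \<union> B. g i) = (\<Sum>a\<in>A. g a) + (\<Sum>f\<in>K1. g (bf f)) + (\<Sum>f\<in>K2. g (nbf f))"
    for g :: "('v \<times> 'v) sset \<Rightarrow> real"
  proof -
    have "(\<Sum>i\<in>A \<union> B. g i) = (\<Sum>a\<in>A. g a) + (\<Sum>i\<in>B. g i)"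
      using finA finB AB by (rule sum.union_disjoint)
    also have "(\<Sum>i\<in>B. g i) = (\<Sum>i\<in>bf ` K1. g i) + (\<Sum>i\<in>nbf ` K2. g i)"
      unfolding B_def using K12 disjB by (intro sum.union_disjoint) auto
    also have "(\<Sum>i\<in>bf ` K1. g i) = (\<Sum>f\<in>K1. g (bf f))" using inj1 by (rule sum.reindex_cong) auto
    also have "(\<Sum>i\<in>nbf ` K2. g i) = (\<Sum>f\<in>K2. g (nbf f))" using inj2 by (rule sum.reindex_cong) auto
    finally show ?thesis by simp
  qed
  have bfA: "bf f \<notin> A" if "f \<in> K1" for f using AB that by (auto simp: B_def)
  have nbfA: "nbf f \<notin> A" "nbf f \<notin> bf ` K1" if "f \<in> K2" for f
    using AB disjB that by (auto simp: B_def)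
  define lam where "lam i = (if i \<in> A then coef i else if i \<in> bf ` K1 then - s (inv_into K1 bf i) / \<beta>
      else s (inv_into K2 nbf i) / \<beta>)" for i
  have lam1: "lam (bf f) = - s f / \<beta>" if "f \<in> K1" for f
    using bfA[OF that] that inv_into_f_f[OF inj1 that] by (simp add: lam_def)
  have lam2: "lam (nbf f) = s f / \<beta>" if "f \<in> K2" for f
    using nbfA[OF that] that inv_into_f_f[OF inj2 that] by (simp add: lam_def)
  have lamA: "lam a = coef a" if "a \<in> A" for a using that by (simp add: lam_def)
  have sum1: "(\<Sum>f\<in>K1. x f * M (bf f) e) = (if e \<in> K1 then x e * \<beta> else 0)"
    if "e \<in> F \<union> K'" for x e
  proof -
    have "(\<Sum>f\<in>K1. x f * M (bf f) e) = (\<Sum>f\<in>K1. if e = f then x f * \<beta> else 0)"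
      using that K12(1) by (intro sum.cong) (auto simp: Mbf)
    also have "\<dots> = (if e \<in> K1 then x e * \<beta> else 0)" using K12(3) by simp
    finally show ?thesis .
  qed
  have sum2: "(\<Sum>f\<in>K2. x f * M (nbf f) e) = (if e \<in> K2 then - x e * \<beta> else 0)"
    if "e \<in> F \<union> K'" for x e
  proof -
    have "(\<Sum>f\<in>K2. x f * M (nbf f) e) = (\<Sum>f\<in>K2. if e = f then - x f * \<beta> else 0)"
      using that K12(2) by (intro sum.cong) (auto simp: Mbf Mnbf)
    also have "\<dots> = (if e \<in> K2 then - x e * \<beta> else 0)" using K12(4) by simp
    finally show ?thesis .
  qed
  have Fsub: "F \<subseteq> F \<union> K'" "K' \<subseteq> F \<union> K'" by auto
  have K1F: "e \<notin> K1" "e \<notin> K2" if "e \<in> F" for e using that K12(1,2) K'E(2) by auto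
  define y where "y e = (\<Sum>i\<in>A \<union> B. lam i * M i e)" for e
  have yFK: "y e = 0" if e: "e \<in> F \<union> K'" for e
  proof -
    have "y e = (\<Sum>a\<in>A. lam a * M a e) + (\<Sum>f\<in>K1. lam (bf f) * M (bf f) e)
               + (\<Sum>f\<in>K2. lam (nbf f) * M (nbf f) e)" unfolding y_def by (rule sumdec)
    also have "(\<Sum>a\<in>A. lam a * M a e) = s e" unfolding s_def by (intro sum.cong) (auto simp: lamA)
    also have "(\<Sum>f\<in>K1. lam (bf f) * M (bf f) e) = (\<Sum>f\<in>K1. (- s f / \<beta>) * M (bf f) e)"
      by (intro sum.cong) (auto simp: lam1)
    also have "\<dots> = (if e \<in> K1 then (- s e / \<beta>) * \<beta> else 0)" by (rule sum1[OF e])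
    also have "(\<Sum>f\<in>K2. lam (nbf f) * M (nbf f) e) = (\<Sum>f\<in>K2. (s f / \<beta>) * M (nbf f) e)"
      by (intro sum.cong) (auto simp: lam2)
    also have "\<dots> = (if e \<in> K2 then - (s e / \<beta>) * \<beta> else 0)" by (rule sum2[OF e])
    finally have ye: "y e = s e + (if e \<in> K1 then (- s e / \<beta>) * \<beta> else 0)
                      + (if e \<in> K2 then - (s e / \<beta>) * \<beta> else 0)" .
    show ?thesis
    proof (cases "e \<in> F")
      case True
      then show ?thesis using ye K1F[OF True] coefdep by (simp add: s_def)
    next
      case False
      then have eK: "e \<in> K'" using e by auto
      have bp: "\<beta> > 0" using fK(12)[OF eK] .
      show ?thesis
      proof (cases "s e < 0")
        case True then have "e \<in> K1" "e \<notin> K2" using eK by (auto simp: K1_def K2_def)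
        then show ?thesis using ye bp by simp
      next
        case F2: False
        show ?thesis
        proof (cases "s e > 0")
          case True then have "e \<notin> K1" "e \<in> K2" using eK by (auto simp: K1_def K2_def)
          then show ?thesis using ye bp by simp
        next
          case False
          then have "s e = 0" "e \<notin> K1" "e \<notin> K2" using F2 by (auto simp: K1_def K2_def)
          then show ?thesis using ye by simp
        qed
      qed
    qed
  qed
  have IC: "A \<union> B \<subseteq> circuits_po Ed P" using AC Bcirc by blast
  have finI: "finite (A \<union> B)" using finA finB by simp
  have yorth: "(\<Sum>e\<in>Ed. y e * h (\<theta> e * pi / 180)) = 0" if h: "h = cos \<or> h = sin" for h
  proof -
    have "(\<Sum>e\<in>Ed. y e * h (\<theta> e * pi / 180))
        = (\<Sum>e\<in>Ed. \<Sum>i\<in>A \<union> B. lam i * (M i e * h (\<theta> e * pi / 180)))"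
      unfolding y_def by (simp add: sum_distrib_right mult.assoc)
    also have "\<dots> = (\<Sum>i\<in>A \<union> B. lam i * (\<Sum>e\<in>Ed. M i e * h (\<theta> e * pi / 180)))"
      by (subst sum.swap) (simp add: sum_distrib_left)
    also have "\<dots> = 0"
      using IC circ_orth[OF finE po _ h] by (intro sum.neutral) (auto simp: M_def)
    finally show ?thesis .
  qed
  have EmS: "Ed - S = F \<union> K'" using SK(1,2) F(1) by (auto simp: K_def)
  have dep: "\<forall>e\<in>Ed. (\<Sum>i\<in>A \<union> B. lam i * M i e) = 0"
    using vanish[OF finE SE _ SK(3) resp yorth yorth] yFK EmS unfolding y_def by auto
  have uq: "\<exists>t. \<forall>i\<in>A \<union> B. \<mu> i = t * lam i"
    if mu: "\<forall>e\<in>Ed. (\<Sum>i\<in>A \<union> B. \<mu> i * M i e) = 0" for \<mu>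
  proof -
    have dec: "(\<Sum>i\<in>A \<union> B. \<mu> i * M i e) = (\<Sum>a\<in>A. \<mu> a * M a e)
       + (if e \<in> K1 then \<mu> (bf e) * \<beta> else 0) + (if e \<in> K2 then - \<mu> (nbf e) * \<beta> else 0)"
      if e: "e \<in> F \<union> K'" for e
      using sumdec[of "\<lambda>i. \<mu> i * M i e"] sum1[OF e, of "\<lambda>f. \<mu> (bf f)"] sum2[OF e, of "\<lambda>f. \<mu> (nbf f)"]
      by simp
    have "\<forall>f\<in>F. (\<Sum>a\<in>A. \<mu> a * M a f) = 0"
    proof
      fix f assume f: "f \<in> F"
      then have "(\<Sum>i\<in>A \<union> B. \<mu> i * M i f) = 0" using mu F(1) by auto
      then show "(\<Sum>a\<in>A. \<mu> a * M a f) = 0" using dec[of f] f K1F[OF f] by simp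
    qed
    then obtain t where t: "\<forall>a\<in>A. \<mu> a = t * coef a" using uniq by blast
    have sA: "(\<Sum>a\<in>A. \<mu> a * M a e) = t * s e" for e
      unfolding s_def using t by (simp add: sum_distrib_left mult.assoc)
    have "\<mu> i = t * lam i" if i: "i \<in> A \<union> B" for i
    proof -
      consider "i \<in> A" | f where "f \<in> K1" "i = bf f" | f where "f \<in> K2" "i = nbf f"
        using i unfolding B_def by blast
      then show ?thesis
      proof cases
        case 1 then show ?thesis using t lamA by simp
      next
        case 2
        have fK': "f \<in> K'" "f \<notin> K2" using 2(1) K12 by auto
        have bp: "\<beta> > 0" using fK(12)[OF fK'(1)] .
        have "0 = t * s f + \<mu> (bf f) * \<beta>"
          using dec[of f] mu fK' 2(1) K'E(1) sA[of f] by auto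
        then have "\<mu> (bf f) = - t * s f / \<beta>" using bp by (simp add: field_simps)
        then show ?thesis using 2 lam1 by simp
      next
        case 3
        have fK': "f \<in> K'" "f \<notin> K1" using 3(1) K12 by auto
        have bp: "\<beta> > 0" using fK(12)[OF fK'(1)] .
        have "0 = t * s f - \<mu> (nbf f) * \<beta>"
          using dec[of f] mu fK' 3(1) K'E(1) sA[of f] by auto
        then have "\<mu> (nbf f) = t * s f / \<beta>" using bp by (simp add: field_simps)
        then show ?thesis using 3 lam2 by simp
      qed
    qed
    then show ?thesis by blast
  qed
  have lampos: "\<forall>i\<in>A \<union> B. lam i > 0"
  proof
    fix i assume i: "i \<in> A \<union> B"
    consider "i \<in> A" | f where "f \<in> K1" "i = bf f" | f where "f \<in> K2" "i = nbf f"
      using i unfolding B_def by blast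
    then show "lam i > 0"
    proof cases
      case 1 then show ?thesis using coefpos lamA by simp
    next
      case 2 then have fK': "f \<in> K'" using K12 by auto
      have "\<beta> > 0" "s f < 0" using fK(12)[OF fK'] 2 by (auto simp: K1_def)
      then show ?thesis using 2 lam1 by (simp add: divide_neg_pos)
    next
      case 3 then have fK': "f \<in> K'" using K12 by auto
      have "\<beta> > 0" "s f > 0" using fK(12)[OF fK'] 3 by (auto simp: K2_def)
      then show ?thesis using 3 lam2 by simp
    qed
  qed
  have "minimal_insoluble Ed (A \<union> B) M"
    using minimal_insoluble_crit[OF finE finI _ lampos dep] Ane uq by blast
  then show "\<exists>B. B \<subseteq> circuits_po Ed P \<and> minimal_insoluble Ed (A \<union> B) (\<lambda>c e. chat P \<theta> c e)"
    using Bcirc unfolding M_def by blast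
qed

end
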